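(* Let $d,k\ge 1$, let $g:\mathbb{R}^{k}\to\mathbb{R}$ be differentiable, and for $B\in\mathbb{R}^{k\times d}$ consider $f(z)=g(Bz)$, $f:\mathbb{R}^d\to\mathbb{R}$. Given one training sample $(x,y)\in\mathbb{R}^d\times\mathbb{R}$, suppose $f$ is trained to minimize $\frac{1}{2}(y-f(x))^2$ by gradient descent on $B$ with learning rate $\eta>0$, i.e. $B^{(t+1)}=B^{(t)}-\eta\,\nabla_B\big[\tfrac12(y-g(B^{(t)}x))^2\big]$. Let $B^{(t)}$ denote $B$ after $t$ steps and $f_t(z):=g(B^{(t)}z)$. If $B^{(0)}=\mathbf{0}$, then for every time step $t$ and every $z\in\mathbb{R}^d$, $$\nabla f_t(z)\,\nabla f_t(z)^T \propto {B^{(t)}}^T B^{(t)},$$ i.e. $\nabla f_t(z)\nabla f_t(z)^T$ is a scalar multiple of ${B^{(t)}}^TB^{(t)}$.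
   Context: $\nabla f_t(z)\in\mathbb{R}^d$ denotes the gradient of $f_t$ with respect to its input $z$. "$P\propto Q$" for matrices means $P=cQ$ for some scalar $c$. *)

theory Defs
  imports "HOL-Analysis.Analysis"
begin

text \<open>Gradient of a real-valued function on a real inner product space (here: vectors
  \<open>real^'n\<close> and matrices \<open>real^'d^'k\<close>, the latter with the Frobenius inner product):
  the unique vector G such that the Frechet derivative at x is \<open>\<lambda>h. G \<bullet> h\<close>.\<close>
definition grad :: "('a::real_inner \<Rightarrow> real) \<Rightarrow> 'a \<Rightarrow> 'a" where
  "grad f x = (THE G. (f has_derivative (\<lambda>h. G \<bullet> h)) (at x))"

end

theory Submission
  imports Defs
begin

lemma grad_eq:
  fixes f :: "real^'n \<Rightarrow> real"
  assumes "(f has_derivative (\<lambda>h. G \<bullet> h)) (at x)"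
  shows "grad f x = G"
  unfolding grad_def
proof (rule the_equality)
  show "(f has_derivative (\<lambda>h. G \<bullet> h)) (at x)" by (rule assms)
  fix G' assume "(f has_derivative (\<lambda>h. G' \<bullet> h)) (at x)"
  then have e: "(\<lambda>h. G' \<bullet> h) = (\<lambda>h. G \<bullet> h)" using has_derivative_unique assms by blast
  have "(G' - G) \<bullet> (G' - G) = 0" using fun_cong[OF e, of "G' - G"] by (simp add: inner_diff_left)
  then show "G' = G" by simp
qed

lemma grad_eq_mat:
  fixes f :: "real^'n^'m \<Rightarrow> real"
  assumes "(f has_derivative (\<lambda>h. G \<bullet> h)) (at x)"
  shows "grad f x = G"
  unfolding grad_def
proof (rule the_equality)
  show "(f has_derivative (\<lambda>h. G \<bullet> h)) (at x)" by (rule assms)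
  fix G' assume "(f has_derivative (\<lambda>h. G' \<bullet> h)) (at x)"
  then have e: "(\<lambda>h. G' \<bullet> h) = (\<lambda>h. G \<bullet> h)" using has_derivative_unique assms by blast
  have "(G' - G) \<bullet> (G' - G) = 0" using fun_cong[OF e, of "G' - G"] by (simp add: inner_diff_left)
  then show "G' = G" by simp
qed

lemma linear_repr:
  fixes L :: "real^'k \<Rightarrow> real"
  assumes "linear L"
  shows "L = (\<lambda>h. (\<chi> i. L (axis i 1)) \<bullet> h)"
proof
  fix h :: "real^'k"
  have "L h = L (\<Sum>i\<in>UNIV. (h$i) *s axis i 1)" by (simp add: basis_expansion)
  also have "\<dots> = (\<Sum>i\<in>UNIV. h$i * L (axis i 1))"
    using assms by (simp add: linear_sum linear_scale scalar_mult_eq_scaleR)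
  also have "\<dots> = (\<chi> i. L (axis i 1)) \<bullet> h" by (simp add: inner_vec_def mult.commute)
  finally show "L h = (\<chi> i. L (axis i 1)) \<bullet> h" .
qed

lemma grad_exists:
  fixes g :: "real^'k \<Rightarrow> real"
  assumes "g differentiable (at w)"
  shows "\<exists>G. (g has_derivative (\<lambda>h. G \<bullet> h)) (at w)"
proof -
  obtain L where L: "(g has_derivative L) (at w)" using assms differentiable_def by blast
  then have "linear L" using has_derivative_linear by blast
  then show ?thesis using L linear_repr by metis
qed

definition outer :: "real^'k \<Rightarrow> real^'d \<Rightarrow> real^'d^'k" where
  "outer u x = (\<chi> i j. u$i * x$j)"

lemma outer_inner: "outer u x \<bullet> H = u \<bullet> (H *v x)"
  by (simp add: outer_def inner_vec_def matrix_vector_mult_def sum_distrib_left mult.assoc mult.commute mult.left_commute)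

lemma outer_mv: "outer u x *v v = (x \<bullet> v) *\<^sub>R u"
  by (simp add: outer_def vec_eq_iff inner_vec_def matrix_vector_mult_def sum_distrib_left
      mult.assoc mult.commute mult.left_commute)

lemma bl_mv: "bounded_linear (\<lambda>M::real^'d^'k. M *v x)"
  apply (rule linear_conv_bounded_linear[THEN iffD1])
  apply (rule linearI)
  by (simp_all add: matrix_vector_mult_def vec_eq_iff sum.distrib ring_distribs sum_distrib_left mult.assoc)

lemma bl_mv2: "bounded_linear (\<lambda>v::real^'d. (M::real^'d^'k) *v v)"
  by (simp add: linear_conv_bounded_linear)

theorem proposition1:
  fixes g :: "real^'k \<Rightarrow> real" and x :: "real^'d" and y \<eta> :: real
    and B :: "nat \<Rightarrow> real^'d^'k"
  assumes "\<forall>w. g differentiable (at w)"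
    and "\<eta> > 0"
    and "B 0 = 0"
    and "\<forall>t. B (Suc t) = B t - \<eta> *\<^sub>R grad (\<lambda>M::real^'d^'k. (1/2) * (y - g (M *v x))\<^sup>2) (B t)"
  shows "\<forall>t (z::real^'d). \<exists>c::real.
           (columnvector (grad (\<lambda>v. g (B t *v v)) z) :: real^1^'d)
             ** rowvector (grad (\<lambda>v. g (B t *v v)) z)
           = c *\<^sub>R (transpose (B t) ** B t)"
proof -
  obtain G where G: "\<And>w. (g has_derivative (\<lambda>h. G w \<bullet> h)) (at w)"
    using grad_exists assms(1) by metis
  have gL: "grad (\<lambda>M::real^'d^'k. (1/2) * (y - g (M *v x))\<^sup>2) M
      = outer (- (y - g (M *v x)) *\<^sub>R G (M *v x)) x" for M
  proof (rule grad_eq_mat)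
    have d1: "((\<lambda>M::real^'d^'k. g (M *v x)) has_derivative (\<lambda>H. G (M *v x) \<bullet> (H *v x))) (at M)"
      using has_derivative_compose[OF bounded_linear_imp_has_derivative[OF bl_mv] G] .
    have "((\<lambda>M::real^'d^'k. (1/2) * (y - g (M *v x))\<^sup>2) has_derivative
        (\<lambda>H. (1/2) * (2 * (y - g (M *v x)) * (0 - G (M *v x) \<bullet> (H *v x))))) (at M)"
      apply (rule has_derivative_eq_rhs)
       apply (rule has_derivative_mult[OF has_derivative_const has_derivative_power[OF has_derivative_diff[OF has_derivative_const d1]]])
      by (auto simp: fun_eq_iff)
    moreover have "(\<lambda>H. (1/2) * (2 * (y - g (M *v x)) * (0 - G (M *v x) \<bullet> (H *v x))))
        = (\<lambda>H. outer (- (y - g (M *v x)) *\<^sub>R G (M *v x)) x \<bullet> H)"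
      by (auto simp: outer_inner fun_eq_iff algebra_simps)
    ultimately show "((\<lambda>M::real^'d^'k. (1/2) * (y - g (M *v x))\<^sup>2) has_derivative
        (\<lambda>H. outer (- (y - g (M *v x)) *\<^sub>R G (M *v x)) x \<bullet> H)) (at M)" by simp
  qed
  have rep: "\<exists>u. B t = outer u x" for t
  proof (induction t)
    case 0 show ?case using assms(3) by (auto intro!: exI[of _ 0] simp: outer_def vec_eq_iff)
  next
    case (Suc t)
    then obtain u where u: "B t = outer u x" by blast
    let ?w = "- (y - g (B t *v x)) *\<^sub>R G (B t *v x)"
    have "B (Suc t) = outer u x - \<eta> *\<^sub>R outer ?w x"
      using assms(4) gL u by metis
    also have "\<dots> = outer (u - \<eta> *\<^sub>R ?w) x"
      by (simp add: outer_def vec_eq_iff algebra_simps)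
    finally have "B (Suc t) = outer (u - \<eta> *\<^sub>R ?w) x" .
    then show ?case by blast
  qed
  show ?thesis
  proof (intro allI)
    fix t and z :: "real^'d"
    obtain u where u: "B t = outer u x" using rep by blast
    define a where "a = G (B t *v z) \<bullet> u"
    have "grad (\<lambda>v. g (B t *v v)) z = a *\<^sub>R x"
    proof (rule grad_eq)
      have "((\<lambda>v. g (B t *v v)) has_derivative (\<lambda>h. G (B t *v z) \<bullet> (B t *v h))) (at z)"
        using has_derivative_compose[OF bounded_linear_imp_has_derivative[OF bl_mv2] G] .
      moreover have "(\<lambda>h. G (B t *v z) \<bullet> (B t *v h)) = (\<lambda>h. (a *\<^sub>R x) \<bullet> h)"
        by (auto simp: u outer_mv a_def)
      ultimately show "((\<lambda>v. g (B t *v v)) has_derivative (\<lambda>h. (a *\<^sub>R x) \<bullet> h)) (at z)" by simp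
    qed
    then have L: "(columnvector (grad (\<lambda>v. g (B t *v v)) z) :: real^1^'d)
             ** rowvector (grad (\<lambda>v. g (B t *v v)) z) = (\<chi> i j. a^2 * (x$i * x$j))"
      by (simp add: vec_eq_iff columnvector_def rowvector_def matrix_matrix_mult_def power2_eq_square)
    have R: "transpose (B t) ** B t = (\<chi> i j. (u \<bullet> u) * (x$i * x$j))"
      by (simp add: u outer_def vec_eq_iff transpose_def matrix_matrix_mult_def inner_vec_def
          sum_distrib_left sum_distrib_right algebra_simps)
    show "\<exists>c. (columnvector (grad (\<lambda>v. g (B t *v v)) z) :: real^1^'d)
             ** rowvector (grad (\<lambda>v. g (B t *v v)) z) = c *\<^sub>R (transpose (B t) ** B t)"
    proof (cases "u = 0")
      case True
      then have "a = 0" by (simp add: a_def)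
      then show ?thesis using L by (intro exI[of _ 0]) (simp add: vec_eq_iff)
    next
      case False
      then have "u \<bullet> u \<noteq> 0" by simp
      then have e: "a^2 / (u \<bullet> u) * (u \<bullet> u) = a^2" by simp
      have "(a^2 / (u \<bullet> u)) *\<^sub>R (transpose (B t) ** B t) = (\<chi> i j. a^2 * (x$i * x$j))"
      proof -
        have "\<And>i j. a^2 / (u \<bullet> u) * ((u \<bullet> u) * (x$i * x$j)) = a^2 * (x$i * x$j)"
          using e by (metis mult.assoc)
        then show ?thesis unfolding R by (simp only: vec_eq_iff vector_scaleR_component vec_lambda_beta) simp
      qed
      then show ?thesis using L by metis
    qed
  qed
qed

end
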